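(* Let $E$ be an IL FS encoder with $s$ states whose Kraft matrix is irreducible, and let $L_{\max}=\max_{z,x}L[f(z,x)]$. Let $x^n\in\mathcal{X}^n$ and $z_1\in\mathcal{Z}$, define $z_{i+1}=g(z_i,x_i)$ for $i=1,\dots,n$, and assume $x^n$ is cyclic with respect to $g$, i.e., $z_{n+1}=z_1$. Extend both sequences periodically, $x_{i+n}=x_i$, $z_{i+n}=z_i$. For $1\le\ell\le n$, let $\hat P$ be the empirical distribution on $\mathcal{Z}\times\mathcal{X}^\ell$ given by $$\hat P(z,w^\ell)=\frac1n\big|\{1\le i\le n:\ z_i=z,\ (x_i,x_{i+1},\dots,x_{i+\ell-1})=w^\ell\}\big|,$$ and let $\hat H(X_\ell\mid X^{\ell-1})$ be the conditional entropy (in bits) of the last coordinate given the first $\ell-1$ coordinates under the $\mathcal{X}^\ell$-marginal of $\hat P$. Then $$\frac1n\sum_{i=1}^n L[f(z_i,x_i)]\ \ge\ \hat H(X_\ell\mid X^{\ell-1})-\frac{2\log_2 s+(s-1)L_{\max}}{\ell}.$$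
   Context: A finite-state (FS) encoder is a quintuple $E=(\mathcal{X},\mathcal{Y},\mathcal{Z},f,g)$, where $\mathcal{X}$ is a finite source alphabet of size $\alpha$, $\mathcal{Y}$ is a finite set of binary strings (possibly containing the empty string, of length $0$), $\mathcal{Z}$ is a finite set of $s$ states, $f:\mathcal{Z}\times\mathcal{X}\to\mathcal{Y}$ is the output function and $g:\mathcal{Z}\times\mathcal{X}\to\mathcal{Z}$ is the next-state function. For $z\in\mathcal{Z}$ and $x^n=(x_1,\dots,x_n)\in\mathcal{X}^n$, set $z_1=z$, $z_{i+1}=g(z_i,x_i)$; write $g(z,x^n)=z_{n+1}$ and let $f(z,x^n)$ denote the binary string obtained by concatenating $f(z_1,x_1),\dots,f(z_n,x_n)$; its length is $L[f(z,x^n)]=\sum_{i=1}^n L[f(z_i,x_i)]$, where $L(\cdot)$ denotes the length of a binary string. The encoder is information lossless (IL) if for every $z\in\mathcal{Z}$ and every $n\ge1$, the map $x^n\mapsto (f(z,x^n),g(z,x^n))$ is injective on $\mathcal{X}^n$. The Kraft matrix of $E$ is the $s\times s$ nonnegative matrix $K$ with entries $K_{zz'}=\sum_{\{x\in\mathcal{X}:\ g(z,x)=z'\}}2^{-L[f(z,x)]}$ (an empty sum is $0$). *)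

theory Defs
  imports Complex_Main
begin

fun fs_next :: "('z \<Rightarrow> 'x \<Rightarrow> 'z) \<Rightarrow> 'z \<Rightarrow> 'x list \<Rightarrow> 'z" where
  "fs_next g z [] = z"
| "fs_next g z (a # w) = fs_next g (g z a) w"

fun fs_out :: "('z \<Rightarrow> 'x \<Rightarrow> bool list) \<Rightarrow> ('z \<Rightarrow> 'x \<Rightarrow> 'z) \<Rightarrow> 'z \<Rightarrow> 'x list \<Rightarrow> bool list" where
  "fs_out f g z [] = []"
| "fs_out f g z (a # w) = f z a @ fs_out f g (g z a) w"

definition info_lossless :: "('z \<Rightarrow> 'x \<Rightarrow> bool list) \<Rightarrow> ('z \<Rightarrow> 'x \<Rightarrow> 'z) \<Rightarrow> bool" where
  "info_lossless f g \<longleftrightarrow>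
     (\<forall>z. \<forall>n\<ge>1. inj_on (\<lambda>w. (fs_out f g z w, fs_next g z w)) {w. length w = n})"

definition kraft_matrix :: "('z \<Rightarrow> 'x \<Rightarrow> bool list) \<Rightarrow> ('z \<Rightarrow> 'x \<Rightarrow> 'z) \<Rightarrow> 'z \<Rightarrow> 'z \<Rightarrow> real" where
  "kraft_matrix f g z z' = (\<Sum>x\<in>{x. g z x = z'}. 2 powr (- real (length (f z x))))"

fun mat_pow :: "('z::finite \<Rightarrow> 'z \<Rightarrow> real) \<Rightarrow> nat \<Rightarrow> 'z \<Rightarrow> 'z \<Rightarrow> real" where
  "mat_pow K 0 = (\<lambda>i j. if i = j then 1 else 0)"
| "mat_pow K (Suc m) = (\<lambda>i j. \<Sum>k\<in>UNIV. mat_pow K m i k * K k j)"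

definition irreducible_mat :: "('z::finite \<Rightarrow> 'z \<Rightarrow> real) \<Rightarrow> bool" where
  "irreducible_mat K \<longleftrightarrow> (\<forall>i j. \<exists>k. mat_pow K k i j > 0)"

definition L_max :: "('z::finite \<Rightarrow> 'x::finite \<Rightarrow> bool list) \<Rightarrow> nat" where
  "L_max f = Max {length (f z x) | z x. True}"

text \<open>Input x^n given as a list xs (0-indexed: x_{i+1} = xs ! i), periodically extended;
  state sequence z_{i+1} (0-indexed state i) starting at z1.\<close>
definition state_seq :: "('z \<Rightarrow> 'x \<Rightarrow> 'z) \<Rightarrow> 'z \<Rightarrow> 'x list \<Rightarrow> nat \<Rightarrow> 'z" where
  "state_seq g z1 xs i = fs_next g z1 (take (i mod length xs) xs)"

definition window :: "'x list \<Rightarrow> nat \<Rightarrow> nat \<Rightarrow> 'x list" where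
  "window xs l i = map (\<lambda>j. xs ! ((i + j) mod length xs)) [0..<l]"

definition emp_joint :: "('z \<Rightarrow> 'x \<Rightarrow> 'z) \<Rightarrow> 'z \<Rightarrow> 'x list \<Rightarrow> nat \<Rightarrow> 'z \<Rightarrow> 'x list \<Rightarrow> real" where
  "emp_joint g z1 xs l z w =
     real (card {i. i < length xs \<and> state_seq g z1 xs i = z \<and> window xs l i = w}) / real (length xs)"

definition emp_marg :: "('z::finite \<Rightarrow> 'x \<Rightarrow> 'z) \<Rightarrow> 'z \<Rightarrow> 'x list \<Rightarrow> nat \<Rightarrow> 'x list \<Rightarrow> real" where
  "emp_marg g z1 xs l w = (\<Sum>z\<in>UNIV. emp_joint g z1 xs l z w)"

text \<open>Conditional entropy (bits) of the last coordinate given the first l-1 coordinates,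
  for a distribution P on X^l; 0 log 0 = 0.\<close>
definition cond_entropy_last :: "('x::finite list \<Rightarrow> real) \<Rightarrow> nat \<Rightarrow> real" where
  "cond_entropy_last P l =
     - (\<Sum>w\<in>{w. length w = l \<and> P w > 0}.
          P w * log 2 (P w / (\<Sum>a\<in>UNIV. P (butlast w @ [a]))))"

end

theory Submission
  imports Defs
begin


lemma fs_next_append: "fs_next g z (u @ v) = fs_next g (fs_next g z u) v"
  by (induction u arbitrary: z) auto

lemma fs_out_append: "fs_out f g z (u @ v) = fs_out f g z u @ fs_out f g (fs_next g z u) v"
  by (induction u arbitrary: z) auto

lemma len_f_le_Lmax: "length (f z x) \<le> L_max f"
proof -
  have "{length (f z x) | z x. True} = (\<lambda>(z,x). length (f z x)) ` UNIV" by auto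
  hence "finite {length (f z x) | z x. True}" by simp
  thus ?thesis unfolding L_max_def by (rule Max_ge) auto
qed

lemma len_fs_out_le: "length (fs_out f g z w) \<le> length w * L_max f"
proof (induction w arbitrary: z)
  case (Cons a w)
  have "length (f z a) \<le> L_max f" by (rule len_f_le_Lmax)
  with Cons[of "g z a"] show ?case by simp
qed simp

definition WW :: "('z \<Rightarrow> 'x \<Rightarrow> bool list) \<Rightarrow> ('z \<Rightarrow> 'x \<Rightarrow> 'z) \<Rightarrow> 'z \<Rightarrow> nat \<Rightarrow> 'z \<Rightarrow> real" where
  "WW f g z m z' = (\<Sum>w\<in>{w. length w = m \<and> fs_next g z w = z'}. 2 powr (- real (length (fs_out f g z w))))"

lemma finite_len_eq: "finite {w::'x::finite list. length w = m}"
  using finite_lists_length_eq[of "UNIV::'x set" m] by simp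

lemma finite_len_eq_P: "finite {w::'x::finite list. length w = m \<and> P w}"
  by (rule finite_subset[OF _ finite_len_eq[of m]]) auto

lemma WW_nonneg: "0 \<le> WW f g z m z'"
  unfolding WW_def by (intro sum_nonneg) auto

lemma WW_0: "WW f g z 0 z = 1"
proof -
  have "{w. length w = 0 \<and> fs_next g z w = z} = {[]}" by auto
  thus ?thesis unfolding WW_def by simp
qed

lemma sum_bool_lists_le: "(\<Sum>b\<in>{b::bool list. length b \<le> N}. 2 powr (- real (length b))) = real N + 1"
proof (induction N)
  case 0
  have "{b::bool list. length b \<le> 0} = {[]}" by auto
  thus ?case by simp
next
  case (Suc N)
  have eq: "{b::bool list. length b \<le> Suc N} = {b. length b \<le> N} \<union> {b. length b = Suc N}" by auto
  have f1: "finite {b::bool list. length b \<le> N}"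
    using finite_lists_length_le[of "UNIV::bool set" N] by simp
  have f2: "finite {b::bool list. length b = Suc N}" by (rule finite_len_eq)
  have c: "card {b::bool list. length b = Suc N} = 2 ^ Suc N"
    using card_lists_length_eq[of "UNIV::bool set" "Suc N"] by simp
  have "(\<Sum>b\<in>{b::bool list. length b = Suc N}. 2 powr (- real (length b)))
      = (\<Sum>b\<in>{b::bool list. length b = Suc N}. 2 powr (- real (Suc N)))" by simp
  also have "\<dots> = real (2 ^ Suc N) * 2 powr (- real (Suc N))" by (simp add: c)
  also have "\<dots> = 1"
  proof -
    have "(2::real) powr (real (Suc N)) = 2 ^ Suc N" by (rule powr_realpow) simp
    hence "real (2 ^ Suc N) = 2 powr (real (Suc N))" by simp
    thus ?thesis by (simp add: powr_add[symmetric])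
  qed
  finally have s2: "(\<Sum>b\<in>{b::bool list. length b = Suc N}. 2 powr (- real (length b))) = 1" .
  have "(\<Sum>b\<in>{b::bool list. length b \<le> Suc N}. 2 powr (- real (length b)))
     = (\<Sum>b\<in>{b::bool list. length b \<le> N}. 2 powr (- real (length b)))
      + (\<Sum>b\<in>{b::bool list. length b = Suc N}. 2 powr (- real (length b)))"
    unfolding eq by (rule sum.union_disjoint[OF f1 f2]) auto
  then show ?case using Suc.IH s2 by simp
qed

lemma WW_le_lin:
  fixes f :: "'z::finite \<Rightarrow> 'x::finite \<Rightarrow> bool list"
  assumes IL: "info_lossless f g"
  shows "WW f g z m z' \<le> real (m * L_max f) + 1"
proof -
  let ?S = "{w. length w = m \<and> fs_next g z w = z'}"
  have inj: "inj_on (fs_out f g z) ?S"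
  proof (cases "m = 0")
    case True
    hence "?S \<subseteq> {[]}" by auto
    thus ?thesis unfolding inj_on_def by auto
  next
    case False
    hence "inj_on (\<lambda>w. (fs_out f g z w, fs_next g z w)) {w. length w = m}"
      using IL unfolding info_lossless_def by auto
    thus ?thesis unfolding inj_on_def by auto
  qed
  have "WW f g z m z' = (\<Sum>b\<in>fs_out f g z ` ?S. 2 powr (- real (length b)))"
    unfolding WW_def by (simp add: sum.reindex[OF inj])
  also have "\<dots> \<le> (\<Sum>b\<in>{b::bool list. length b \<le> m * L_max f}. 2 powr (- real (length b)))"
  proof (rule sum_mono2)
    show "finite {b::bool list. length b \<le> m * L_max f}"
      using finite_lists_length_le[of "UNIV::bool set"] by simp
    show "fs_out f g z ` ?S \<subseteq> {b. length b \<le> m * L_max f}"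
      using len_fs_out_le[of f g z] by auto
  qed auto
  also have "\<dots> = real (m * L_max f) + 1" by (rule sum_bool_lists_le)
  finally show ?thesis .
qed

lemma WW_supermult:
  fixes f :: "'z::finite \<Rightarrow> 'x::finite \<Rightarrow> bool list"
  shows "WW f g z a z' * WW f g z' b z'' \<le> WW f g z (a + b) z''"
proof -
  let ?S1 = "{w. length w = a \<and> fs_next g z w = z'}"
  let ?S2 = "{w. length w = b \<and> fs_next g z' w = z''}"
  let ?S3 = "{w. length w = a + b \<and> fs_next g z w = z''}"
  let ?h = "\<lambda>w. 2 powr (- real (length (fs_out f g z w)))"
  have "WW f g z a z' * WW f g z' b z'' =
      (\<Sum>u\<in>?S1. \<Sum>v\<in>?S2. 2 powr (- real (length (fs_out f g z u))) * 2 powr (- real (length (fs_out f g z' v))))"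
    unfolding WW_def by (simp add: sum_product)
  also have "\<dots> = (\<Sum>u\<in>?S1. \<Sum>v\<in>?S2. ?h (u @ v))"
    by (intro sum.cong refl) (simp add: fs_out_append powr_add[symmetric] add.commute)
  also have "\<dots> = (\<Sum>(u,v)\<in>?S1 \<times> ?S2. ?h (u @ v))"
    by (rule sum.cartesian_product)
  also have "\<dots> = (\<Sum>w\<in>(\<lambda>(u,v). u @ v) ` (?S1 \<times> ?S2). ?h w)"
  proof -
    have inj: "inj_on (\<lambda>(u, v). u @ v) (?S1 \<times> ?S2)"
      unfolding inj_on_def by auto
    show ?thesis by (rule sym, rule sum.reindex_cong[OF inj]) auto
  qed
  also have "\<dots> \<le> (\<Sum>w\<in>?S3. ?h w)"
    by (rule sum_mono2[OF finite_len_eq_P]) (auto simp: fs_next_append)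
  finally show ?thesis unfolding WW_def .
qed

lemma pow_beats_linear:
  fixes t c :: real
  assumes t: "t > 1" and c: "c \<ge> 0"
  shows "\<exists>m. t ^ m > real m * c + 1"
proof -
  define d where "d = t - 1"
  have d: "d > 0" using t d_def by simp
  define k where "k = nat \<lceil>2 * c / d^2\<rceil> + 1"
  have k1: "real k \<ge> 2 * c / d^2 + 0" unfolding k_def by linarith
  hence kd: "real k * d^2 \<ge> 2 * c" using d by (simp add: field_simps)
  have kpos: "real k > 0" unfolding k_def by simp
  have b: "1 + real k * d \<le> t ^ k"
    using Bernoulli_inequality[of d k] d unfolding d_def by simp
  have "(1 + real k * d)^2 \<le> (t ^ k)^2"
    using b d kpos by (intro power_mono) auto
  moreover have "(1 + real k * d)^2 > real k * (real k * d^2) + 1"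
    using d kpos by (simp add: power2_eq_square algebra_simps)
  moreover have "real k * (real k * d^2) \<ge> real k * (2 * c)"
    using kd kpos by (intro mult_left_mono) auto
  ultimately have "t ^ (2 * k) > real (2 * k) * c + 1"
    by (simp add: power_mult[symmetric] mult.commute[of 2 k] algebra_simps)
  thus ?thesis by blast
qed

lemma WW_diag_le1:
  fixes f :: "'z::finite \<Rightarrow> 'x::finite \<Rightarrow> bool list"
  assumes IL: "info_lossless f g"
  shows "WW f g z N z \<le> 1"
proof (rule ccontr)
  assume "\<not> ?thesis"
  hence t: "WW f g z N z > 1" by simp
  have pw: "WW f g z N z ^ m \<le> WW f g z (m * N) z" for m
  proof (induction m)
    case 0 thus ?case by (simp add: WW_0)
  next
    case (Suc m)
    have "WW f g z N z ^ Suc m = WW f g z N z * WW f g z N z ^ m" by simp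
    also have "\<dots> \<le> WW f g z N z * WW f g z (m * N) z"
      using Suc t by (intro mult_left_mono) auto
    also have "\<dots> \<le> WW f g z (N + m * N) z" by (rule WW_supermult)
    finally show ?case by simp
  qed
  obtain m where m: "WW f g z N z ^ m > real m * real (N * L_max f) + 1"
    using pow_beats_linear[OF t, of "real (N * L_max f)"] by auto
  have "WW f g z (m * N) z \<le> real (m * N * L_max f) + 1" by (rule WW_le_lin[OF IL])
  with pw[of m] m show False by (simp add: mult.assoc)
qed

lemma mat_pow_nonneg: "0 \<le> mat_pow (kraft_matrix f g) k i j"
proof (induction k arbitrary: j)
  case (Suc k)
  have "0 \<le> kraft_matrix f g q j" for q unfolding kraft_matrix_def by (intro sum_nonneg) auto
  with Suc show ?case by (auto intro!: sum_nonneg)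
qed simp

lemma mat_pow_pos_word:
  fixes f :: "'z::finite \<Rightarrow> 'x::finite \<Rightarrow> bool list"
  assumes "mat_pow (kraft_matrix f g) k i j > 0"
  shows "\<exists>w. length w = k \<and> fs_next g i w = j"
  using assms
proof (induction k arbitrary: j)
  case 0 thus ?case by (auto split: if_splits)
next
  case (Suc k)
  from Suc.prems have "(\<Sum>q\<in>UNIV. mat_pow (kraft_matrix f g) k i q * kraft_matrix f g q j) > 0" by simp
  then obtain q where q: "mat_pow (kraft_matrix f g) k i q * kraft_matrix f g q j > 0"
    by (metis (no_types, lifting) not_le sum_nonpos)
  have kn: "0 \<le> kraft_matrix f g q j" unfolding kraft_matrix_def by (intro sum_nonneg) auto
  from q mat_pow_nonneg[of f g k i q] kn
  have p1: "mat_pow (kraft_matrix f g) k i q > 0" and p2: "kraft_matrix f g q j > 0"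
    by (auto simp: zero_less_mult_iff)
  from Suc.IH[OF p1] obtain w where w: "length w = k" "fs_next g i w = q" by auto
  from p2 obtain x where x: "g q x = j" unfolding kraft_matrix_def
    by (metis (mono_tags, lifting) empty_Collect_eq less_irrefl sum.empty)
  show ?case using w x by (intro exI[of _ "w @ [x]"]) (simp add: fs_next_append)
qed

lemma short_word:
  fixes g :: "'z::finite \<Rightarrow> 'x \<Rightarrow> 'z"
  shows "fs_next g i w = j \<Longrightarrow> \<exists>w'. length w' \<le> card (UNIV::'z set) - 1 \<and> fs_next g i w' = j"
proof (induction "length w" arbitrary: w rule: less_induct)
  case less
  show ?case
  proof (cases "length w \<le> card (UNIV::'z set) - 1")
    case True thus ?thesis using less.prems by blast
  next
    case False
    let ?h = "\<lambda>k. fs_next g i (take k w)"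
    have "\<not> inj_on ?h {0..length w}"
    proof
      assume inj: "inj_on ?h {0..length w}"
      have "card (?h ` {0..length w}) = length w + 1" using card_image[OF inj] by simp
      moreover have "card (?h ` {0..length w}) \<le> card (UNIV::'z set)" by (rule card_mono) auto
      ultimately show False using False by simp
    qed
    then obtain a b where ab: "a \<le> length w" "b \<le> length w" "a \<noteq> b" "?h a = ?h b"
      unfolding inj_on_def by auto
    define a' b' where "a' = min a b" and "b' = max a b"
    have ab': "a' < b'" "b' \<le> length w" "?h a' = ?h b'"
      using ab unfolding a'_def b'_def by (auto simp: min_def max_def)
    define w' where "w' = take a' w @ drop b' w"
    have "fs_next g i w' = fs_next g (?h b') (drop b' w)"
      unfolding w'_def using ab'(3) by (simp add: fs_next_append)
    also have "\<dots> = fs_next g i w"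
      by (subst append_take_drop_id[symmetric, of w b']) (simp only: fs_next_append)
    finally have "fs_next g i w' = j" using less.prems by simp
    moreover have "length w' < length w" unfolding w'_def using ab' by simp
    ultimately show ?thesis using less.hyps by blast
  qed
qed

lemma irr_word:
  fixes f :: "'z::finite \<Rightarrow> 'x::finite \<Rightarrow> bool list"
  assumes irr: "irreducible_mat (kraft_matrix f g)"
  shows "\<exists>w. length w \<le> card (UNIV::'z set) - 1 \<and> fs_next g i w = j"
proof -
  obtain k where "mat_pow (kraft_matrix f g) k i j > 0" using irr unfolding irreducible_mat_def by blast
  from mat_pow_pos_word[OF this] obtain w where "fs_next g i w = j" by blast
  thus ?thesis by (rule short_word)
qed

lemma WW_lower:
  fixes f :: "'z::finite \<Rightarrow> 'x::finite \<Rightarrow> bool list"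
  assumes "length w = k" "fs_next g z w = z'"
  shows "2 powr (- real (k * L_max f)) \<le> WW f g z k z'"
proof -
  have h: "length (fs_out f g z w) \<le> k * L_max f" using len_fs_out_le[of f g z w] assms by simp
  hence "real (length (fs_out f g z w)) \<le> real (k * L_max f)" by (simp only: of_nat_le_iff)
  hence "2 powr (- real (k * L_max f)) \<le> 2 powr (- real (length (fs_out f g z w)))"
    by simp
  also have "\<dots> \<le> WW f g z k z'" unfolding WW_def
    by (rule member_le_sum[OF _ _ finite_len_eq_P, of w]) (use assms in auto)
  finally show ?thesis .
qed

lemma WW_le_const:
  fixes f :: "'z::finite \<Rightarrow> 'x::finite \<Rightarrow> bool list"
  assumes IL: "info_lossless f g" and irr: "irreducible_mat (kraft_matrix f g)"
  shows "WW f g z m z' \<le> 2 powr (real ((card (UNIV::'z set) - 1) * L_max f))"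
proof -
  obtain w where w: "length w \<le> card (UNIV::'z set) - 1" "fs_next g z' w = z"
    using irr_word[OF irr] by blast
  define k where "k = length w"
  have lo: "2 powr (- real (k * L_max f)) \<le> WW f g z' k z"
    using WW_lower[of w k g z' z f] w k_def by simp
  have "WW f g z m z' * WW f g z' k z \<le> WW f g z (m + k) z" by (rule WW_supermult)
  also have "\<dots> \<le> 1" by (rule WW_diag_le1[OF IL])
  finally have "WW f g z m z' * 2 powr (- real (k * L_max f)) \<le> 1"
    using lo WW_nonneg[of f g z m z'] by (meson mult_left_mono order_trans)
  hence "WW f g z m z' \<le> 2 powr (real (k * L_max f))"
    by (simp add: powr_minus field_simps)
  also have "\<dots> \<le> 2 powr (real ((card (UNIV::'z set) - 1) * L_max f))"
    using w(1) k_def by (simp add: mult_right_mono)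
  finally show ?thesis .
qed

lemma row_sum_bound:
  fixes f :: "'z::finite \<Rightarrow> 'x::finite \<Rightarrow> bool list"
  assumes IL: "info_lossless f g" and irr: "irreducible_mat (kraft_matrix f g)"
  shows "(\<Sum>w\<in>{w::'x list. length w = m}. 2 powr (- real (length (fs_out f g z w))))
         \<le> real (card (UNIV::'z set)) * 2 powr (real ((card (UNIV::'z set) - 1) * L_max f))"
proof -
  have "(\<Sum>w\<in>{w::'x list. length w = m}. 2 powr (- real (length (fs_out f g z w))))
      = (\<Sum>z'\<in>(UNIV::'z set). WW f g z m z')"
    unfolding WW_def
  proof (subst sum.image_gen[OF finite_len_eq, where g="fs_next g z"])
    show "(\<Sum>y\<in>fs_next g z ` {w. length w = m}. \<Sum>w | w \<in> {w. length w = m} \<and> fs_next g z w = y. 2 powr - real (length (fs_out f g z w))) =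
    (\<Sum>z'\<in>UNIV. \<Sum>w | length w = m \<and> fs_next g z w = z'. 2 powr - real (length (fs_out f g z w)))"
      by (rule sum.mono_neutral_cong_left) (auto intro!: sum.neutral)
  qed
  also have "\<dots> \<le> (\<Sum>z'\<in>(UNIV::'z set). 2 powr (real ((card (UNIV::'z set) - 1) * L_max f)))"
    by (rule sum_mono) (rule WW_le_const[OF IL irr])
  finally show ?thesis by simp
qed



lemma group_pos:
  fixes F :: "'a \<Rightarrow> real" and \<phi> :: "nat \<Rightarrow> 'a" and n :: nat
  shows "(\<Sum>i<n. F (\<phi> i)) = (\<Sum>u\<in>\<phi> ` {..<n}. real (card {i. i < n \<and> \<phi> i = u}) * F u)"
proof -
  have "(\<Sum>i<n. F (\<phi> i)) = (\<Sum>u\<in>\<phi> ` {..<n}. \<Sum>i\<in>{x \<in> {..<n}. \<phi> x = u}. F (\<phi> i))"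
    by (rule sum.image_gen[OF finite_lessThan, where g=\<phi> and h="\<lambda>i. F (\<phi> i)"])
  also have "\<dots> = (\<Sum>u\<in>\<phi> ` {..<n}. real (card {i. i < n \<and> \<phi> i = u}) * F u)"
  proof (rule sum.cong[OF refl])
    fix u
    have "(\<Sum>i\<in>{x \<in> {..<n}. \<phi> x = u}. F (\<phi> i)) = (\<Sum>i\<in>{x \<in> {..<n}. \<phi> x = u}. F u)"
      by (rule sum.cong) auto
    also have "\<dots> = real (card {i. i < n \<and> \<phi> i = u}) * F u" by simp
    finally show "(\<Sum>i\<in>{x \<in> {..<n}. \<phi> x = u}. F (\<phi> i)) = real (card {i. i < n \<and> \<phi> i = u}) * F u" .
  qed
  finally show ?thesis .
qed

lemma log2_le: "0 < (y::real) \<Longrightarrow> log 2 y \<le> (y - 1) / ln 2"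
  using ln_le_minus_one[of y] by (simp add: log_def divide_right_mono)

lemma gibbs_pos:
  fixes \<rho> :: "'a \<Rightarrow> real" and \<phi> :: "nat \<Rightarrow> 'a" and n :: nat
  assumes n: "n > 0" and U: "finite U" "\<phi> ` {..<n} \<subseteq> U"
    and rn: "\<forall>u\<in>U. \<rho> u \<ge> 0" and rp: "\<forall>i<n. \<rho> (\<phi> i) > 0"
    and C: "(\<Sum>u\<in>U. \<rho> u) \<le> C"
  shows "(\<Sum>i<n. log 2 (\<rho> (\<phi> i) / (real (card {j. j < n \<and> \<phi> j = \<phi> i}) / real n))) \<le> real n * log 2 C"
proof -
  define I where "I = \<phi> ` {..<n}"
  define c where "c u = real (card {j. j < n \<and> \<phi> j = u}) / real n" for u
  have cpos: "c u > 0" if "u \<in> I" for u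
  proof -
    from that obtain i where "i < n" "\<phi> i = u" unfolding I_def by auto
    hence "{j. j < n \<and> \<phi> j = u} \<noteq> {}" by auto
    moreover have "finite {j. j < n \<and> \<phi> j = u}" by simp
    ultimately have "card {j. j < n \<and> \<phi> j = u} > 0" by (simp add: card_gt_0_iff)
    thus ?thesis unfolding c_def using n by simp
  qed
  have rpos: "\<rho> u > 0" if "u \<in> I" for u using that rp unfolding I_def by auto
  have finI: "finite I" unfolding I_def by simp
  have Cpos: "C > 0"
  proof -
    have "\<phi> 0 \<in> U" using U n by auto
    hence "\<rho> (\<phi> 0) \<le> (\<Sum>u\<in>U. \<rho> u)" by (intro member_le_sum) (use rn U in auto)
    thus ?thesis using rp n C by force
  qed
  have sumc: "(\<Sum>u\<in>I. c u) = 1"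
  proof -
    have "real n = (\<Sum>i<n. (1::real))" by simp
    also have "\<dots> = (\<Sum>u\<in>I. real (card {i. i < n \<and> \<phi> i = u}) * 1)"
      unfolding I_def by (rule group_pos)
    finally have "(\<Sum>u\<in>I. real (card {i. i < n \<and> \<phi> i = u})) = real n" by simp
    thus ?thesis unfolding c_def using n by (simp add: sum_divide_distrib[symmetric])
  qed
  have sumr: "(\<Sum>u\<in>I. \<rho> u) \<le> C"
    using sum_mono2[OF U(1), of I \<rho>] U rn C unfolding I_def by force
  have pt: "c u * log 2 (\<rho> u / c u) \<le> c u * log 2 C + (\<rho> u / C - c u) / ln 2" if "u \<in> I" for u
  proof -
    have cp: "c u > 0" and rq: "\<rho> u > 0" using cpos rpos that by auto
    have "log 2 (\<rho> u / c u) = log 2 C + log 2 (\<rho> u / (c u * C))"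
      using cp rq Cpos by (simp add: log_divide log_mult)
    moreover have "log 2 (\<rho> u / (c u * C)) \<le> (\<rho> u / (c u * C) - 1) / ln 2"
      using cp rq Cpos by (intro log2_le) simp
    ultimately have "c u * log 2 (\<rho> u / c u) \<le> c u * (log 2 C + (\<rho> u / (c u * C) - 1) / ln 2)"
      using cp by (intro mult_left_mono) auto
    also have "\<dots> = c u * log 2 C + (\<rho> u / C - c u) / ln 2"
      using cp Cpos by (simp add: field_simps)
    finally show ?thesis .
  qed
  have "(\<Sum>i<n. log 2 (\<rho> (\<phi> i) / c (\<phi> i))) = (\<Sum>u\<in>I. real (card {i. i < n \<and> \<phi> i = u}) * log 2 (\<rho> u / c u))"
    unfolding I_def by (rule group_pos)
  also have "\<dots> = real n * (\<Sum>u\<in>I. c u * log 2 (\<rho> u / c u))"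
    unfolding c_def using n by (simp add: sum_distrib_left)
  also have "\<dots> \<le> real n * (\<Sum>u\<in>I. c u * log 2 C + (\<rho> u / C - c u) / ln 2)"
    using pt by (intro mult_left_mono sum_mono) auto
  also have "(\<Sum>u\<in>I. c u * log 2 C + (\<rho> u / C - c u) / ln 2)
      = log 2 C * (\<Sum>u\<in>I. c u) + ((\<Sum>u\<in>I. \<rho> u) / C - (\<Sum>u\<in>I. c u)) / ln 2"
    by (simp add: sum.distrib sum_divide_distrib[symmetric] sum_subtractf sum_distrib_right[symmetric])
  also have "\<dots> \<le> log 2 C"
  proof -
    have "(\<Sum>u\<in>I. \<rho> u) / C \<le> 1" using sumr Cpos by simp
    thus ?thesis unfolding sumc by (simp add: divide_nonpos_pos)
  qed
  finally show ?thesis unfolding c_def using n by (simp add: mult_left_mono)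
qed



lemma card_ind: fixes n :: nat shows "real (card {i. i < n \<and> P i}) = (\<Sum>i<n. if P i then 1 else (0::real))"
  using sum.inter_filter[OF finite_lessThan[of n], of "\<lambda>_. (1::real)" P] by simp

lemma gen_marg:
  fixes c :: "nat \<Rightarrow> 'b::finite"
  shows "(\<Sum>b\<in>UNIV. real (card {i. i < n \<and> P i \<and> c i = b})) = real (card {i. i < n \<and> P i})"
proof -
  have "(\<Sum>b\<in>UNIV. real (card {i. i < n \<and> P i \<and> c i = b}))
      = (\<Sum>b\<in>UNIV. \<Sum>i<n. if P i \<and> c i = b then 1 else (0::real))"
    by (simp only: card_ind)
  also have "\<dots> = (\<Sum>i<n. \<Sum>b\<in>UNIV. if P i \<and> c i = b then 1 else (0::real))"
    by (rule sum.swap)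
  also have "\<dots> = (\<Sum>i<n. if P i then 1 else (0::real))"
  proof (rule sum.cong[OF refl])
    fix i
    show "(\<Sum>b\<in>UNIV. if P i \<and> c i = b then 1 else (0::real)) = (if P i then 1 else 0)"
      by (cases "P i") (simp_all add: sum.delta)
  qed
  also have "\<dots> = real (card {i. i < n \<and> P i})" by (simp only: card_ind)
  finally show ?thesis .
qed

lemma shift_sum:
  fixes h :: "nat \<Rightarrow> real"
  assumes per: "\<And>i. h (i + n) = h i"
  shows "(\<Sum>i<n. h (i + j)) = (\<Sum>i<n. h i)"
proof (induction j)
  case (Suc j)
  have a: "(\<Sum>i<Suc n. h (i + j)) = h (0 + j) + (\<Sum>i<n. h (Suc i + j))"
    by (rule sum.lessThan_Suc_shift)
  have b: "(\<Sum>i<Suc n. h (i + j)) = (\<Sum>i<n. h (i + j)) + h (n + j)"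
    by (rule sum.lessThan_Suc)
  have c: "h (n + j) = h j" using per[of j] by (simp add: add.commute)
  from a b c have "(\<Sum>i<n. h (Suc i + j)) = (\<Sum>i<n. h (i + j))" by simp
  thus ?case using Suc by simp
qed simp

lemma window_length[simp]: "length (window xs k i) = k"
  unfolding window_def by simp

lemma window_mod: "window xs k (i mod length xs) = window xs k i"
  unfolding window_def by (simp add: mod_add_left_eq)

lemma window_per: "window xs k (i + length xs) = window xs k i"
proof -
  have "(i + length xs + x) mod length xs = (i + x) mod length xs" for x
  proof -
    have "i + length xs + x = (i + x) + length xs" by simp
    thus ?thesis by (simp only: mod_add_self2)
  qed
  thus ?thesis unfolding window_def by simp
qed

lemma window_snoc: "window xs (Suc k) i = window xs k i @ [xs ! ((i + k) mod length xs)]"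
  unfolding window_def by simp

lemma window_cons: "window xs (Suc k) i = xs ! (i mod length xs) # window xs k (Suc i)"
  unfolding window_def by (simp add: upt_conv_Cons map_Suc_upt[symmetric] del: upt_Suc)

lemma window_0[simp]: "window xs 0 i = []"
  unfolding window_def by simp

definition pk :: "'x list \<Rightarrow> nat \<Rightarrow> 'x list \<Rightarrow> real" where
  "pk xs k u = real (card {i. i < length xs \<and> window xs k i = u}) / real (length xs)"

lemma pk_nonneg: "0 \<le> pk xs k u" unfolding pk_def by simp

lemma pk_pos: assumes "xs \<noteq> []" shows "0 < pk xs k (window xs k j)"
proof -
  have "j mod length xs \<in> {i. i < length xs \<and> window xs k i = window xs k j}"
    using assms by (simp add: window_mod)
  hence "card {i. i < length xs \<and> window xs k i = window xs k j} > 0"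
    by (metis (no_types, lifting) card_gt_0_iff empty_iff finite_nat_set_iff_bounded mem_Collect_eq)
  thus ?thesis unfolding pk_def using assms by simp
qed

lemma pk_0: "xs \<noteq> [] \<Longrightarrow> pk xs 0 [] = 1"
  unfolding pk_def by simp

lemma M1:
  fixes xs :: "'x::finite list"
  shows "(\<Sum>b\<in>UNIV. pk xs (Suc k) (v @ [b])) = pk xs k v"
proof -
  have "(\<Sum>b\<in>UNIV. pk xs (Suc k) (v @ [b])) =
     (\<Sum>b\<in>UNIV. real (card {i. i < length xs \<and> window xs k i = v \<and> xs ! ((i + k) mod length xs) = b})) / real (length xs)"
    unfolding pk_def by (simp add: window_snoc sum_divide_distrib)
  also have "\<dots> = pk xs k v" unfolding pk_def by (simp only: gen_marg)
  finally show ?thesis .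
qed

lemma M2:
  fixes xs :: "'x::finite list"
  shows "(\<Sum>a\<in>UNIV. pk xs (Suc k) (a # v)) = pk xs k v"
proof -
  have "(\<Sum>a\<in>UNIV. pk xs (Suc k) (a # v)) =
     (\<Sum>a\<in>UNIV. real (card {i. i < length xs \<and> window xs k (Suc i) = v \<and> xs ! (i mod length xs) = a})) / real (length xs)"
    unfolding pk_def by (simp add: window_cons sum_divide_distrib conj_commute)
  also have "\<dots> = real (card {i. i < length xs \<and> window xs k (Suc i) = v}) / real (length xs)"
    by (simp only: gen_marg)
  also have "real (card {i. i < length xs \<and> window xs k (Suc i) = v}) = real (card {i. i < length xs \<and> window xs k i = v})"
  proof -
    have "(\<Sum>i<length xs. if window xs k (i + 1) = v then 1 else (0::real)) = (\<Sum>i<length xs. if window xs k i = v then 1 else (0::real))"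
      by (rule shift_sum[where h="\<lambda>i. if window xs k i = v then 1 else (0::real)"]) (simp add: window_per)
    thus ?thesis by (simp add: card_ind)
  qed
  finally show ?thesis unfolding pk_def .
qed

lemma M3:
  fixes xs :: "'x::finite list"
  assumes "xs \<noteq> []"
  shows "(\<Sum>v\<in>{v. length v = k}. pk xs k v) = 1"
proof -
  have "(\<Sum>v\<in>{v. length v = k}. pk xs k v) = (\<Sum>v\<in>{v. length v = k}. \<Sum>i<length xs. if window xs k i = v then 1 else (0::real)) / real (length xs)"
    unfolding pk_def by (simp add: card_ind sum_divide_distrib)
  also have "(\<Sum>v\<in>{v. length v = k}. \<Sum>i<length xs. if window xs k i = v then 1 else (0::real))
    = (\<Sum>i<length xs. \<Sum>v\<in>{v. length v = k}. if window xs k i = v then 1 else (0::real))"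
    by (rule sum.swap)
  also have "\<dots> = (\<Sum>i<length xs. 1)"
    by (rule sum.cong[OF refl]) (simp add: sum.delta'[OF finite_len_eq])
  finally show ?thesis using assms by simp
qed

lemma L1:
  fixes F :: "'x::finite list \<Rightarrow> real"
  shows "(\<Sum>u\<in>{u. length u = Suc m}. F u) = (\<Sum>a\<in>UNIV. \<Sum>t\<in>{t. length t = m}. F (a # t))"
proof -
  have img: "{u. length u = Suc m} = (\<lambda>(a,t). a # t) ` (UNIV \<times> {t. length t = m})"
    by (auto simp: length_Suc_conv image_iff)
  have inj: "inj_on (\<lambda>(a,t). a # t) (UNIV \<times> {t::'x list. length t = m})"
    unfolding inj_on_def by auto
  have "(\<Sum>u\<in>(\<lambda>(a,t). a # t) ` (UNIV \<times> {t. length t = m}). F u) = (\<Sum>(a,t)\<in>UNIV \<times> {t. length t = m}. F (a # t))"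
    by (rule sum.reindex_cong[OF inj refl]) auto
  also have "\<dots> = (\<Sum>a\<in>UNIV. \<Sum>t\<in>{t. length t = m}. F (a # t))"
    by (rule sum.cartesian_product[symmetric])
  finally show ?thesis unfolding img .
qed

lemma L2:
  fixes F :: "'x::finite list \<Rightarrow> real"
  shows "(\<Sum>u\<in>{u. length u = Suc m}. F u) = (\<Sum>t\<in>{t. length t = m}. \<Sum>b\<in>UNIV. F (t @ [b]))"
proof -
  have img: "{u::'x list. length u = Suc m} = (\<lambda>(t,b). t @ [b]) ` ({t. length t = m} \<times> UNIV)"
  proof (intro equalityI subsetI)
    fix u :: "'x list" assume "u \<in> {u. length u = Suc m}"
    hence "u = butlast u @ [last u]" "length (butlast u) = m"
      by (auto intro: append_butlast_last_id[symmetric])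
    thus "u \<in> (\<lambda>(t,b). t @ [b]) ` ({t. length t = m} \<times> UNIV)"
      by (metis (mono_tags, lifting) SigmaI UNIV_I case_prod_conv image_eqI mem_Collect_eq)
  qed auto
  have inj: "inj_on (\<lambda>(t,b). t @ [b]) ({t::'x list. length t = m} \<times> UNIV)"
    unfolding inj_on_def by auto
  have "(\<Sum>u\<in>(\<lambda>(t,b). t @ [b]) ` ({t. length t = m} \<times> UNIV). F u) = (\<Sum>(t,b)\<in>{t. length t = m} \<times> UNIV. F (t @ [b]))"
    by (rule sum.reindex_cong[OF inj refl]) auto
  also have "\<dots> = (\<Sum>t\<in>{t. length t = m}. \<Sum>b\<in>UNIV. F (t @ [b]))"
    by (rule sum.cartesian_product[symmetric])
  finally show ?thesis unfolding img .
qed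



definition GG :: "'x list \<Rightarrow> nat \<Rightarrow> real" where
  "GG xs k = (\<Sum>i<length xs. log 2 (pk xs k (window xs k i)))"

lemma GG_0: "xs \<noteq> [] \<Longrightarrow> GG xs 0 = 0"
  unfolding GG_def by (simp add: pk_0)

lemma G_shift: "(\<Sum>i<length xs. log 2 (pk xs k (window xs k (Suc i)))) = GG xs k"
proof -
  have "(\<Sum>i<length xs. log 2 (pk xs k (window xs k (i + 1)))) = (\<Sum>i<length xs. log 2 (pk xs k (window xs k i)))"
    by (rule shift_sum[where h="\<lambda>i. log 2 (pk xs k (window xs k i))"]) (simp add: window_per)
  thus ?thesis unfolding GG_def by simp
qed

definition RR :: "'x list \<Rightarrow> nat \<Rightarrow> 'x list \<Rightarrow> real" where
  "RR xs m u = pk xs (Suc m) (butlast u) * pk xs (Suc m) (tl u) / pk xs m (tl (butlast u))"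

lemma RR_sum:
  fixes xs :: "'x::finite list"
  assumes ne: "xs \<noteq> []"
  shows "(\<Sum>u\<in>{u. length u = Suc (Suc m)}. RR xs m u) \<le> 1"
proof -
  have "(\<Sum>u\<in>{u. length u = Suc (Suc m)}. RR xs m u)
      = (\<Sum>a\<in>UNIV. \<Sum>t\<in>{t. length t = Suc m}. RR xs m (a # t))" by (rule L1)
  also have "\<dots> = (\<Sum>a\<in>UNIV. \<Sum>v\<in>{v. length v = m}. \<Sum>b\<in>UNIV. RR xs m (a # v @ [b]))"
    by (subst L2) simp
  also have "\<dots> = (\<Sum>a\<in>UNIV. \<Sum>v\<in>{v. length v = m}. \<Sum>b\<in>UNIV. pk xs (Suc m) (a # v) * pk xs (Suc m) (v @ [b]) / pk xs m v)"
    unfolding RR_def by (simp add: butlast_append)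
  also have "\<dots> = (\<Sum>v\<in>{v. length v = m}. \<Sum>a\<in>UNIV. \<Sum>b\<in>UNIV. pk xs (Suc m) (a # v) * pk xs (Suc m) (v @ [b]) / pk xs m v)"
    by (rule sum.swap)
  also have "\<dots> = (\<Sum>v\<in>{v. length v = m}. (\<Sum>a\<in>UNIV. pk xs (Suc m) (a # v)) * (\<Sum>b\<in>UNIV. pk xs (Suc m) (v @ [b])) / pk xs m v)"
    by (simp add: sum_product sum_divide_distrib)
  also have "\<dots> = (\<Sum>v\<in>{v. length v = m}. pk xs m v)"
    by (simp add: M1 M2)
  also have "\<dots> = 1" by (rule M3[OF ne])
  finally show ?thesis by simp
qed

lemma butlast_window: "butlast (window xs (Suc k) i) = window xs k i"
  by (simp add: window_snoc)

lemma tl_window: "tl (window xs (Suc k) i) = window xs k (Suc i)"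
  by (simp add: window_cons)

lemma GG_step:
  fixes xs :: "'x::finite list"
  assumes ne: "xs \<noteq> []"
  shows "2 * GG xs (Suc m) \<le> GG xs m + GG xs (Suc (Suc m))"
proof -
  let ?n = "length xs"
  let ?\<phi> = "window xs (Suc (Suc m))"
  have n: "?n > 0" using ne by simp
  have gb: "(\<Sum>i<?n. log 2 (RR xs m (?\<phi> i) / (real (card {j. j < ?n \<and> ?\<phi> j = ?\<phi> i}) / real ?n)))
      \<le> real ?n * log 2 1"
  proof (rule gibbs_pos[OF n, where U="{u. length u = Suc (Suc m)}"])
    show "finite {u::'x list. length u = Suc (Suc m)}" by (rule finite_len_eq)
    show "?\<phi> ` {..<?n} \<subseteq> {u. length u = Suc (Suc m)}" by auto
    show "\<forall>u\<in>{u. length u = Suc (Suc m)}. 0 \<le> RR xs m u"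
      unfolding RR_def by (simp add: pk_nonneg)
    show "\<forall>i<?n. 0 < RR xs m (?\<phi> i)"
      unfolding RR_def using ne
      by (simp add: butlast_window tl_window pk_pos del: window_length)
    show "(\<Sum>u\<in>{u. length u = Suc (Suc m)}. RR xs m u) \<le> 1" by (rule RR_sum[OF ne])
  qed
  have eq: "log 2 (RR xs m (?\<phi> i) / (real (card {j. j < ?n \<and> ?\<phi> j = ?\<phi> i}) / real ?n))
     = log 2 (pk xs (Suc m) (window xs (Suc m) i)) + log 2 (pk xs (Suc m) (window xs (Suc m) (Suc i)))
       - log 2 (pk xs m (window xs m (Suc i))) - log 2 (pk xs (Suc (Suc m)) (window xs (Suc (Suc m)) i))" for i
  proof -
    have "real (card {j. j < ?n \<and> ?\<phi> j = ?\<phi> i}) / real ?n = pk xs (Suc (Suc m)) (?\<phi> i)"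
      unfolding pk_def by simp
    moreover have "RR xs m (?\<phi> i) = pk xs (Suc m) (window xs (Suc m) i) * pk xs (Suc m) (window xs (Suc m) (Suc i)) / pk xs m (window xs m (Suc i))"
      unfolding RR_def by (simp add: butlast_window tl_window del: window_length)
    moreover have "0 < pk xs (Suc m) (window xs (Suc m) i)" "0 < pk xs (Suc m) (window xs (Suc m) (Suc i))"
      "0 < pk xs m (window xs m (Suc i))" "0 < pk xs (Suc (Suc m)) (window xs (Suc (Suc m)) i)"
      using pk_pos[OF ne] by auto
    ultimately show ?thesis by (simp add: log_divide log_mult)
  qed
  have "(\<Sum>i<?n. log 2 (RR xs m (?\<phi> i) / (real (card {j. j < ?n \<and> ?\<phi> j = ?\<phi> i}) / real ?n)))
     = GG xs (Suc m) + GG xs (Suc m) - GG xs m - GG xs (Suc (Suc m))"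
    by (simp only: eq sum_subtractf sum.distrib G_shift) (simp add: GG_def)
  with gb show ?thesis by simp
qed

definition DD :: "'x list \<Rightarrow> nat \<Rightarrow> real" where
  "DD xs j = GG xs j - GG xs (Suc j)"

lemma GG_tele: "xs \<noteq> [] \<Longrightarrow> GG xs l = - (\<Sum>j<l. DD xs j)"
  by (induction l) (simp_all add: GG_0 DD_def)

lemma GG_bound:
  fixes xs :: "'x::finite list"
  assumes ne: "xs \<noteq> []"
  shows "- GG xs (Suc m) \<ge> real (Suc m) * DD xs m"
proof -
  have mono: "DD xs j' \<le> DD xs j" if "j \<le> j'" for j j'
  proof (rule lift_Suc_antimono_le[OF _ that])
    fix k show "DD xs (Suc k) \<le> DD xs k" using GG_step[OF ne, of k] unfolding DD_def by simp
  qed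
  have "real (Suc m) * DD xs m = (\<Sum>j<Suc m. DD xs m)" by simp
  also have "\<dots> \<le> (\<Sum>j<Suc m. DD xs j)" by (rule sum_mono) (simp add: mono)
  finally show ?thesis using GG_tele[OF ne, of "Suc m"] by simp
qed

lemma cond_ent_eq:
  fixes xs :: "'x::finite list"
  assumes ne: "xs \<noteq> []"
  shows "cond_entropy_last (pk xs (Suc m)) (Suc m) = DD xs m / real (length xs)"
proof -
  let ?n = "length xs"
  let ?P = "pk xs (Suc m)"
  let ?\<phi> = "window xs (Suc m)"
  let ?F = "\<lambda>w. log 2 (?P w / (\<Sum>a\<in>UNIV. ?P (butlast w @ [a])))"
  have n: "?n > 0" using ne by simp
  have S: "{w. length w = Suc m \<and> ?P w > 0} = ?\<phi> ` {..<?n}"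
  proof (intro equalityI subsetI)
    fix w assume "w \<in> {w. length w = Suc m \<and> ?P w > 0}"
    hence "?P w > 0" by simp
    hence "card {i. i < ?n \<and> ?\<phi> i = w} \<noteq> 0" unfolding pk_def by (metis div_0 of_nat_0 less_irrefl)
    then obtain i where "i < ?n" "?\<phi> i = w" by (metis (mono_tags, lifting) Collect_empty_eq card.empty)
    thus "w \<in> ?\<phi> ` {..<?n}" by auto
  next
    fix w assume "w \<in> ?\<phi> ` {..<?n}"
    thus "w \<in> {w. length w = Suc m \<and> ?P w > 0}" using pk_pos[OF ne] by auto
  qed
  have "(\<Sum>w\<in>{w. length w = Suc m \<and> ?P w > 0}. ?P w * ?F w)
      = (\<Sum>w\<in>?\<phi> ` {..<?n}. real (card {i. i < ?n \<and> ?\<phi> i = w}) * ?F w) / real ?n"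
    unfolding S by (simp add: pk_def sum_divide_distrib)
  also have "\<dots> = (\<Sum>i<?n. ?F (?\<phi> i)) / real ?n"
    by (simp only: group_pos[of ?F ?\<phi> ?n])
  also have "(\<Sum>i<?n. ?F (?\<phi> i)) = (\<Sum>i<?n. log 2 (?P (?\<phi> i)) - log 2 (pk xs m (window xs m i)))"
  proof (rule sum.cong[OF refl])
    fix i
    have "(\<Sum>a\<in>UNIV. ?P (butlast (?\<phi> i) @ [a])) = pk xs m (window xs m i)"
      by (simp add: butlast_window M1 del: window_length)
    thus "?F (?\<phi> i) = log 2 (?P (?\<phi> i)) - log 2 (pk xs m (window xs m i))"
      using pk_pos[OF ne, of "Suc m" i] pk_pos[OF ne, of m i] by (simp add: log_divide)
  qed
  also have "\<dots> = GG xs (Suc m) - GG xs m" by (simp add: sum_subtractf GG_def)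
  finally show ?thesis unfolding cond_entropy_last_def DD_def by (simp add: minus_divide_left)
qed



lemma st_per: "state_seq g z1 xs (i + length xs) = state_seq g z1 xs i"
  unfolding state_seq_def by simp

lemma st_step:
  assumes ne: "xs \<noteq> []" and cyc: "fs_next g z1 xs = z1"
  shows "state_seq g z1 xs (Suc i) = g (state_seq g z1 xs i) (xs ! (i mod length xs))"
proof -
  let ?n = "length xs"
  let ?r = "i mod ?n"
  have r: "?r < ?n" using ne by simp
  have tk: "take (Suc ?r) xs = take ?r xs @ [xs ! ?r]" using r by (rule take_Suc_conv_app_nth)
  show ?thesis
  proof (cases "Suc ?r = ?n")
    case True
    hence "Suc i mod ?n = 0" by (simp add: mod_Suc)
    hence "state_seq g z1 xs (Suc i) = z1" unfolding state_seq_def by simp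
    moreover have "g (state_seq g z1 xs i) (xs ! ?r) = fs_next g z1 (take (Suc ?r) xs)"
      unfolding state_seq_def tk by (simp add: fs_next_append)
    moreover have "take (Suc ?r) xs = xs" using True by simp
    ultimately show ?thesis using cyc by simp
  next
    case False
    hence "Suc i mod ?n = Suc ?r" by (simp add: mod_Suc)
    thus ?thesis unfolding state_seq_def by (simp add: tk fs_next_append)
  qed
qed

lemma block_len:
  assumes ne: "xs \<noteq> []" and cyc: "fs_next g z1 xs = z1"
  shows "real (length (fs_out f g (state_seq g z1 xs i) (window xs k i)))
     = (\<Sum>j<k. real (length (f (state_seq g z1 xs (i + j)) (xs ! ((i + j) mod length xs)))))"
proof (induction k arbitrary: i)
  case (Suc k)
  let ?c = "\<lambda>i. real (length (f (state_seq g z1 xs i) (xs ! (i mod length xs))))"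
  have gs: "g (state_seq g z1 xs i) (xs ! (i mod length xs)) = state_seq g z1 xs (Suc i)"
    by (rule st_step[OF ne cyc, symmetric])
  have "real (length (fs_out f g (state_seq g z1 xs i) (window xs (Suc k) i)))
      = ?c i + real (length (fs_out f g (state_seq g z1 xs (Suc i)) (window xs k (Suc i))))"
    unfolding window_cons by (simp add: gs)
  also have "\<dots> = ?c (i + 0) + (\<Sum>j<k. ?c (i + Suc j))"
    by (simp add: Suc[of "Suc i"])
  also have "\<dots> = (\<Sum>j<Suc k. ?c (i + j))"
    by (rule sum.lessThan_Suc_shift[symmetric])
  finally show ?case .
qed simp

lemma emp_marg_eq:
  fixes g :: "'z::finite \<Rightarrow> 'x \<Rightarrow> 'z"
  shows "emp_marg g z1 xs l = pk xs l"
proof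
  fix w
  have "emp_marg g z1 xs l w = (\<Sum>z\<in>UNIV. real (card {i. i < length xs \<and> window xs l i = w \<and> state_seq g z1 xs i = z})) / real (length xs)"
    unfolding emp_marg_def emp_joint_def sum_divide_distrib
    by (intro sum.cong refl arg_cong[where f="\<lambda>S. real (card S) / _"]) auto
  also have "\<dots> = pk xs l w" unfolding pk_def by (simp only: gen_marg)
  finally show "emp_marg g z1 xs l w = pk xs l w" .
qed




theorem mainTheorem7:
  fixes f :: "'z::finite \<Rightarrow> 'x::finite \<Rightarrow> bool list"
    and g :: "'z \<Rightarrow> 'x \<Rightarrow> 'z"
    and z1 :: 'z and xs :: "'x list" and l :: nat
  assumes IL: "info_lossless f g"
    and irr: "irreducible_mat (kraft_matrix f g)"
    and cyc: "fs_next g z1 xs = z1"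
    and l1: "1 \<le> l" and ln: "l \<le> length xs"
  shows "(1 / real (length xs)) * (\<Sum>i<length xs. real (length (f (state_seq g z1 xs i) (xs ! i))))
         \<ge> cond_entropy_last (emp_marg g z1 xs l) l
           - (2 * log 2 (real (card (UNIV :: 'z set))) + (real (card (UNIV :: 'z set)) - 1) * real (L_max f)) / real l"
proof -
  let ?n = "length xs"
  let ?st = "state_seq g z1 xs"
  have ne: "xs \<noteq> []" using l1 ln by auto
  have n: "?n > 0" using ne by simp
  obtain m where lm: "l = Suc m" using l1 by (cases l) auto
  define s where "s = card (UNIV :: 'z set)"
  have s1: "s \<ge> 1" unfolding s_def using finite_UNIV_card_ge_0[where 'a='z] by simp
  define X where "X = real ((s - 1) * L_max f)"
  define C where "C = real s * (real s * 2 powr X)"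
  define c where "c i = real (length (f (?st i) (xs ! (i mod ?n))))" for i
  define T where "T = (\<Sum>i<?n. c i)"
  define B where "B i = real (length (fs_out f g (?st i) (window xs l i)))" for i
  have T_eq: "(\<Sum>i<?n. real (length (f (?st i) (xs ! i)))) = T"
    unfolding T_def c_def by (rule sum.cong) auto
  have c_per: "c (i + ?n) = c i" for i unfolding c_def by (simp add: st_per)
  have sumB: "(\<Sum>i<?n. B i) = real l * T"
  proof -
    have "(\<Sum>i<?n. B i) = (\<Sum>i<?n. \<Sum>j<l. c (i + j))"
      unfolding B_def c_def by (intro sum.cong refl block_len[OF ne cyc])
    also have "\<dots> = (\<Sum>j<l. \<Sum>i<?n. c (i + j))" by (rule sum.swap)
    also have "\<dots> = (\<Sum>j<l. T)" unfolding T_def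
      by (intro sum.cong refl shift_sum c_per)
    finally show ?thesis by simp
  qed
  define \<phi> where "\<phi> i = (?st i, window xs l i)" for i
  define \<rho> where "\<rho> p = 2 powr (- real (length (fs_out f g (fst p) (snd p))))" for p
  have gb: "(\<Sum>i<?n. log 2 (\<rho> (\<phi> i) / (real (card {j. j < ?n \<and> \<phi> j = \<phi> i}) / real ?n))) \<le> real ?n * log 2 C"
  proof (rule gibbs_pos[OF n, where U="(UNIV::'z set) \<times> {w. length w = l}"])
    show "finite ((UNIV::'z set) \<times> {w::'x list. length w = l})" using finite_len_eq[of l] by (intro finite_SigmaI) auto
    show "\<phi> ` {..<?n} \<subseteq> (UNIV::'z set) \<times> {w. length w = l}" unfolding \<phi>_def by auto
    show "\<forall>u\<in>(UNIV::'z set) \<times> {w. length w = l}. 0 \<le> \<rho> u" unfolding \<rho>_def by simp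
    show "\<forall>i<?n. 0 < \<rho> (\<phi> i)" unfolding \<rho>_def by simp
    have "(\<Sum>u\<in>(UNIV::'z set) \<times> {w. length w = l}. \<rho> u) = (\<Sum>z\<in>UNIV. \<Sum>w\<in>{w. length w = l}. \<rho> (z, w))"
      by (simp add: sum.cartesian_product)
    also have "\<dots> \<le> (\<Sum>z\<in>(UNIV::'z set). real s * 2 powr X)"
      unfolding \<rho>_def X_def s_def
      by (rule sum_mono) (simp only: fst_conv snd_conv, rule row_sum_bound[OF IL irr])
    also have "\<dots> = C" unfolding C_def s_def by simp
    finally show "(\<Sum>u\<in>(UNIV::'z set) \<times> {w. length w = l}. \<rho> u) \<le> C" .
  qed
  have pt: "- B i - log 2 (pk xs l (window xs l i))
      \<le> log 2 (\<rho> (\<phi> i) / (real (card {j. j < ?n \<and> \<phi> j = \<phi> i}) / real ?n))" if i: "i < ?n" for i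
  proof -
    let ?cj = "real (card {j. j < ?n \<and> \<phi> j = \<phi> i}) / real ?n"
    have sub: "{j. j < ?n \<and> \<phi> j = \<phi> i} \<subseteq> {j. j < ?n \<and> window xs l j = window xs l i}"
      unfolding \<phi>_def by auto
    have "card {j. j < ?n \<and> \<phi> j = \<phi> i} \<le> card {j. j < ?n \<and> window xs l j = window xs l i}"
      by (rule card_mono[OF _ sub]) simp
    hence cle: "?cj \<le> pk xs l (window xs l i)" unfolding pk_def
      by (simp add: divide_right_mono)
    have "i \<in> {j. j < ?n \<and> \<phi> j = \<phi> i}" using i by simp
    hence "card {j. j < ?n \<and> \<phi> j = \<phi> i} > 0" by (metis (no_types, lifting) card_gt_0_iff empty_iff finite_nat_set_iff_bounded mem_Collect_eq)
    hence cpos: "?cj > 0" using n by simp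
    have lr: "log 2 (\<rho> (\<phi> i)) = - B i" unfolding \<rho>_def \<phi>_def B_def by simp
    have "log 2 (\<rho> (\<phi> i) / ?cj) = log 2 (\<rho> (\<phi> i)) - log 2 ?cj"
    proof (rule log_divide_pos)
      show "0 < \<rho> (\<phi> i)" unfolding \<rho>_def by simp
    qed (use cpos in auto)
    moreover have "log 2 ?cj \<le> log 2 (pk xs l (window xs l i))"
      using cpos cle by simp
    ultimately show ?thesis using lr by simp
  qed
  have "(\<Sum>i<?n. - B i - log 2 (pk xs l (window xs l i))) \<le> real ?n * log 2 C"
  proof -
    have "(\<Sum>i<?n. - B i - log 2 (pk xs l (window xs l i)))
       \<le> (\<Sum>i<?n. log 2 (\<rho> (\<phi> i) / (real (card {j. j < ?n \<and> \<phi> j = \<phi> i}) / real ?n)))"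
      by (rule sum_mono) (use pt in simp)
    with gb show ?thesis by linarith
  qed
  hence A: "- real l * T - GG xs l \<le> real ?n * log 2 C"
    by (simp add: sum_subtractf sum_negf sumB GG_def)
  have Bd: "- GG xs l \<ge> real l * DD xs m" using GG_bound[OF ne, of m] lm by simp
  have ce: "cond_entropy_last (emp_marg g z1 xs l) l = DD xs m / real ?n"
    using cond_ent_eq[OF ne, of m] lm by (simp add: emp_marg_eq)
  have logC: "log 2 C = 2 * log 2 (real s) + (real s - 1) * real (L_max f)"
  proof -
    have sp: "real s > 0" using s1 by simp
    have "log 2 C = log 2 (real s) + log 2 (real s) + X"
      unfolding C_def using sp by (simp add: log_mult)
    moreover have "X = (real s - 1) * real (L_max f)" unfolding X_def using s1 by (simp add: of_nat_diff)
    ultimately show ?thesis by simp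
  qed
  have key: "real l * T \<ge> real l * DD xs m - real ?n * log 2 C" using A Bd by simp
  have lpos: "real l > 0" using l1 by simp
  have "DD xs m / real ?n - log 2 C / real l \<le> T / real ?n"
  proof -
    have "(DD xs m / real ?n - log 2 C / real l) * (real l * real ?n) = real l * DD xs m - real ?n * log 2 C"
      using lpos n by (simp add: field_simps)
    also have "\<dots> \<le> real l * T" by (rule key)
    also have "\<dots> = T / real ?n * (real l * real ?n)" using n by (simp add: field_simps)
    finally have "(DD xs m / real ?n - log 2 C / real l) * (real l * real ?n) \<le> T / real ?n * (real l * real ?n)" .
    moreover have "real l * real ?n > 0" using lpos n by simp
    ultimately show ?thesis using mult_le_cancel_right_pos by blast
  qed
  thus ?thesis unfolding T_eq ce logC[symmetric] s_def[symmetric] by simp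
qed

end
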